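(* Let $G$ be a $1$-tuple regular finite group, let $N$ be a subgroup of $G$ that is a union of order classes, set $\bar G=G/N$, and let $a,b\in\bar G$ be elements of the same order. Then (i) there exist preimages $g_a,g_b\in G$ of $a$ and $b$, respectively, with the same order; and (ii) the conjugacy classes of $a$ and $b$ in $\bar G$ have the same size.
   Context: A subgroup $N$ of $G$ is a union of order classes if for every $n\in\mathbb{N}$ it contains either all or none of the elements of order $n$ of $G$ (such $N$ is normal). A finite group $G$ is $1$-tuple regular if for all $g_1,h_1\in G$ of the same order there is a bijection $\Psi\colon G\to G$ such that for every $g\in G$ the assignment $g_1\mapsto h_1, g\mapsto\Psi(g)$ defines an isomorphism $\langle g_1,g\rangle\to\langle h_1,\Psi(g)\rangle$. *)

theory Defs
  imports "HOL-Algebra.Algebra"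
begin

definition union_of_order_classes :: "('a, 'b) monoid_scheme \<Rightarrow> 'a set \<Rightarrow> bool" where
  "union_of_order_classes G N \<longleftrightarrow> subgroup N G \<and>
     (\<forall>g \<in> carrier G. \<forall>h \<in> carrier G. group.ord G g = group.ord G h \<longrightarrow> (g \<in> N \<longleftrightarrow> h \<in> N))"

definition one_tuple_regular :: "('a, 'b) monoid_scheme \<Rightarrow> bool" where
  "one_tuple_regular G \<longleftrightarrow>
     (\<forall>g1 \<in> carrier G. \<forall>h1 \<in> carrier G. group.ord G g1 = group.ord G h1 \<longrightarrow>
        (\<exists>\<Psi>. bij_betw \<Psi> (carrier G) (carrier G) \<and>
          (\<forall>g \<in> carrier G. \<exists>\<phi>.
             \<phi> \<in> iso (subgroup_generated G {g1, g}) (subgroup_generated G {h1, \<Psi> g}) \<and>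
             \<phi> g1 = h1 \<and> \<phi> g = \<Psi> g)))"

definition conj_class :: "('a, 'b) monoid_scheme \<Rightarrow> 'a \<Rightarrow> 'a set" where
  "conj_class G x = {g \<otimes>\<^bsub>G\<^esub> x \<otimes>\<^bsub>G\<^esub> inv\<^bsub>G\<^esub> g | g. g \<in> carrier G}"

end

theory Submission
  imports Defs "HOL-Number_Theory.Cong"
begin

lemma nt_key:
  fixes m n n' p :: nat
  assumes n: "n > 0" and n': "n' > 0" and mn: "m dvd n" and mn': "m dvd n'" and p: "Factorial_Ring.prime p"
    and pm: "p dvd m" and lt: "multiplicity p n < multiplicity p n'"
  shows "\<exists>e. e dvd n \<and> e dvd n' \<and> \<not> m dvd n div e \<and> m dvd n' div e"
proof -
  have m0: "m \<noteq> 0" using mn n by auto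
  define v where "v = multiplicity p m"
  define al where "al = multiplicity p n"
  define be where "be = multiplicity p n'"
  have v1: "v \<ge> 1" using p pm m0 prime_multiplicity_gt_zero_iff[of p m] unfolding v_def by auto
  have va: "v \<le> al" unfolding v_def al_def using dvd_imp_multiplicity_le[OF mn] n by auto
  define e where "e = p ^ (al - v + 1)"
  have ep: "e > 0" using p e_def by (simp add: prime_gt_0_nat)
  have en: "e dvd n" unfolding e_def using multiplicity_dvd'[of "al - v + 1" p n] va v1 al_def by auto
  have en': "e dvd n'" unfolding e_def using multiplicity_dvd'[of "al - v + 1" p n'] va v1 lt al_def be_def by auto
  have me: "multiplicity p e = al - v + 1" unfolding e_def using p multiplicity_prime_power[of p "al - v + 1"] prime_imp_prime_elem by blast
  have d1: "n = e * (n div e)" using en by simp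
  have d2: "n' = e * (n' div e)" using en' by simp
  have nd0: "n div e \<noteq> 0" using d1 n by (metis mult_0_right less_irrefl)
  have nd0': "n' div e \<noteq> 0" using d2 n' by (metis mult_0_right less_irrefl)
  have "al = multiplicity p e + multiplicity p (n div e)"
    using prime_elem_multiplicity_mult_distrib[of p e "n div e"] p ep nd0 d1 al_def by simp
  hence A: "multiplicity p (n div e) = v - 1" using me va v1 by simp
  have "\<not> m dvd n div e"
  proof
    assume "m dvd n div e"
    hence "v \<le> multiplicity p (n div e)" unfolding v_def using dvd_imp_multiplicity_le nd0 by blast
    thus False using A v1 by simp
  qed
  moreover have "m dvd n' div e"
  proof (rule multiplicity_le_imp_dvd[OF m0])
    fix q :: nat assume q: "Factorial_Ring.prime q"
    have sp: "multiplicity q n' = multiplicity q e + multiplicity q (n' div e)"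
      using prime_elem_multiplicity_mult_distrib[of q e "n' div e"] q ep nd0' d2 by simp
    show "multiplicity q m \<le> multiplicity q (n' div e)"
    proof (cases "q = p")
      case True
      have "be = al - v + 1 + multiplicity p (n' div e)" using sp True me be_def by simp
      thus ?thesis using lt va unfolding True v_def al_def be_def by linarith
    next
      case False
      have "multiplicity q e = 0" unfolding e_def
        using False p q multiplicity_distinct_prime_power[of q p "al - v + 1"] by metis
      hence "multiplicity q n' = multiplicity q (n' div e)" using sp by simp
      thus ?thesis using dvd_imp_multiplicity_le[OF mn', of q] n' by simp
    qed
  qed
  ultimately show ?thesis using en en' by blast
qed

lemma (in group) ord_eqI:
  assumes "x \<in> carrier G" "y \<in> carrier G" "\<And>n::nat. x [^] n = \<one> \<longleftrightarrow> y [^] n = \<one>"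
  shows "ord x = ord y"
proof -
  have "\<And>n. ord x dvd n \<longleftrightarrow> ord y dvd n" using assms pow_eq_id by metis
  thus ?thesis by (meson dvd_antisym dvd_refl)
qed

lemma (in group) conj_pow:
  assumes "g \<in> carrier G" "h \<in> carrier G"
  shows "(g \<otimes> h \<otimes> inv g) [^] (n::nat) = g \<otimes> h [^] n \<otimes> inv g"
proof (induction n)
  case 0
  then show ?case using assms by simp
next
  case (Suc n)
  have "(g \<otimes> h \<otimes> inv g) [^] Suc n = (g \<otimes> h [^] n \<otimes> inv g) \<otimes> (g \<otimes> h \<otimes> inv g)"
    using Suc by simp
  also have "\<dots> = g \<otimes> (h [^] n \<otimes> h) \<otimes> inv g"
  proof -
    have c: "\<And>u. u \<in> carrier G \<Longrightarrow> inv g \<otimes> (g \<otimes> u) = u" using assms by (metis l_inv l_one m_assoc inv_closed)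
    show ?thesis using assms c by (simp add: m_assoc)
  qed
  also have "\<dots> = g \<otimes> h [^] Suc n \<otimes> inv g" by simp
  finally show ?case .
qed

lemma (in group) ord_conj:
  assumes "g \<in> carrier G" "h \<in> carrier G"
  shows "ord (g \<otimes> h \<otimes> inv g) = ord h"
proof (rule ord_eqI)
  fix n :: nat
  have "g \<otimes> h [^] n \<otimes> inv g = \<one> \<longleftrightarrow> h [^] n = \<one>"
  proof
    assume A: "g \<otimes> h [^] n \<otimes> inv g = \<one>"
    have c: "\<And>u. u \<in> carrier G \<Longrightarrow> inv g \<otimes> (g \<otimes> u) = u" using assms by (metis l_inv l_one m_assoc inv_closed)
    have "h [^] n = inv g \<otimes> (g \<otimes> h [^] n \<otimes> inv g) \<otimes> g" using assms c by (simp add: m_assoc)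
    thus "h [^] n = \<one>" using A assms by simp
  qed (use assms in simp)
  thus "(g \<otimes> h \<otimes> inv g) [^] n = \<one> \<longleftrightarrow> h [^] n = \<one>" using conj_pow assms by simp
qed (use assms in auto)

lemma (in group) iso_sg_ord:
  assumes "f \<in> iso (subgroup_generated G S) (subgroup_generated G T)"
    and "w \<in> carrier (subgroup_generated G S)"
  shows "ord (f w) = ord w"
proof -
  let ?H = "subgroup_generated G S" and ?K = "subgroup_generated G T"
  have fh: "f \<in> hom ?H ?K" using assms(1) unfolding iso_def by blast
  have gh: "group_hom ?H ?K f"
    unfolding group_hom_def group_hom_axioms_def using fh group_subgroup_generated by blast
  have inj: "inj_on f (carrier ?H)" using assms(1) unfolding iso_def bij_betw_def by blast
  have fw: "f w \<in> carrier ?K" using group_hom.hom_closed[OF gh assms(2)] .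
  have cH: "carrier ?H \<subseteq> carrier G" "carrier ?K \<subseteq> carrier G"
    using carrier_subgroup_generated_subset by blast+
  show ?thesis
  proof (rule ord_eqI)
    show "f w \<in> carrier G" using fw cH by blast
    show "w \<in> carrier G" using assms(2) cH by blast
    fix n :: nat
    have p1: "f (w [^] n) = f w [^] n"
      using group_hom.hom_nat_pow[OF gh assms(2), of n] unfolding pow_subgroup_generated .
    have wn: "w [^] n \<in> carrier ?H"
      using monoid.nat_pow_closed[OF group.is_monoid[OF group_subgroup_generated[of S]] assms(2), of n]
      unfolding pow_subgroup_generated .
    have o1: "\<one> \<in> carrier ?H"
      using monoid.one_closed[OF group.is_monoid[OF group_subgroup_generated[of S]]]
      unfolding one_subgroup_generated .
    have f1: "f \<one> = \<one>" using group_hom.hom_one[OF gh] unfolding one_subgroup_generated .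
    have "f (w [^] n) = f \<one> \<longleftrightarrow> w [^] n = \<one>"
      using inj_on_eq_iff[OF inj wn o1] .
    thus "f w [^] n = \<one> \<longleftrightarrow> w [^] n = \<one>" using p1 f1 by simp
  qed
qed

theorem lemma3p5:
  fixes G (structure) and N :: "'a set" and a b :: "'a set"
  assumes "group G" and "finite (carrier G)"
    and "one_tuple_regular G"
    and "union_of_order_classes G N"
    and "a \<in> carrier (G Mod N)" and "b \<in> carrier (G Mod N)"
    and "group.ord (G Mod N) a = group.ord (G Mod N) b"
  shows "(\<exists>ga \<in> a. \<exists>gb \<in> b. group.ord G ga = group.ord G gb)
    \<and> card (conj_class (G Mod N) a) = card (conj_class (G Mod N) b)"
proof -
  interpret group G by fact
  note fin = assms(2)
  have sN: "subgroup N G" using assms(4) unfolding union_of_order_classes_def by simp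
  have oc: "\<And>u v. u \<in> carrier G \<Longrightarrow> v \<in> carrier G \<Longrightarrow> ord u = ord v \<Longrightarrow> (u \<in> N \<longleftrightarrow> v \<in> N)"
    using assms(4) unfolding union_of_order_classes_def by blast
  have nN: "N \<lhd> G"
  proof -
    have "\<forall>x \<in> carrier G. \<forall>h \<in> N. x \<otimes> h \<otimes> inv x \<in> N"
    proof (intro ballI)
      fix x h assume x: "x \<in> carrier G" and h: "h \<in> N"
      have hc: "h \<in> carrier G" using sN h subgroup.subset by blast
      show "x \<otimes> h \<otimes> inv x \<in> N" using oc[of "x \<otimes> h \<otimes> inv x" h] ord_conj[OF x hc] x hc h by simp
    qed
    thus ?thesis using normal_inv_iff sN by blast
  qed
  interpret normal N G by fact
  define Q where "Q = G Mod N"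
  have gQ: "group Q" unfolding Q_def by (rule factorgroup_is_group)
  have finQ: "finite (carrier Q)" unfolding Q_def carrier_FactGroup using fin by simp
  have hom: "(\<lambda>x. N #> x) \<in> hom G Q" unfolding Q_def by (rule r_coset_hom_Mod)
  have gh: "group_hom G Q (\<lambda>x. N #> x)"
    unfolding group_hom_def group_hom_axioms_def using gQ hom by (simp add: is_group)
  have oneQ: "\<one>\<^bsub>Q\<^esub> = N" unfolding Q_def by simp
  have Nsub: "N \<subseteq> carrier G" using sN subgroup.subset by blast
  have kerN: "\<And>x. x \<in> carrier G \<Longrightarrow> N #> x = N \<longleftrightarrow> x \<in> N"
    using rcos_const[OF is_group] rcos_self[OF _ sN] by metis
  have eqN: "\<And>u v. u \<in> carrier G \<Longrightarrow> v \<in> carrier G \<Longrightarrow> N #> u = N #> v \<longleftrightarrow> u \<otimes> inv v \<in> N"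
  proof -
    fix u v assume u: "u \<in> carrier G" and v: "v \<in> carrier G"
    have "N #> u = N #> v \<longleftrightarrow> u \<in> N #> v"
      using repr_independence[OF _ v sN] rcos_self[OF u sN] by metis
    thus "N #> u = N #> v \<longleftrightarrow> u \<otimes> inv v \<in> N"
      using subgroup.rcos_module[OF sN is_group v u] by simp
  qed
  have powQ: "\<And>x k. x \<in> carrier G \<Longrightarrow> (N #> x) [^]\<^bsub>Q\<^esub> (k::nat) = N #> (x [^] k)"
    using group_hom.hom_nat_pow[OF gh] by metis
  have memQ: "\<And>z k. z \<in> carrier G \<Longrightarrow> (z [^] (k::nat) \<in> N \<longleftrightarrow> group.ord Q (N #> z) dvd k)"
  proof -
    fix z and k :: nat assume z: "z \<in> carrier G"
    have zc: "N #> z \<in> carrier Q" using group_hom.hom_closed[OF gh z] .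
    have "z [^] k \<in> N \<longleftrightarrow> (N #> z) [^]\<^bsub>Q\<^esub> k = \<one>\<^bsub>Q\<^esub>"
      using powQ[OF z, of k] kerN[OF nat_pow_closed[OF z, of k]] oneQ by simp
    thus "z [^] k \<in> N \<longleftrightarrow> group.ord Q (N #> z) dvd k"
      using group.pow_eq_id[OF gQ zc] by simp
  qed
  have cosQ: "\<And>c. c \<in> carrier Q \<Longrightarrow> \<exists>x \<in> carrier G. c = N #> x"
    unfolding Q_def carrier_FactGroup by auto
  have elQ: "\<And>c z. c \<in> carrier Q \<Longrightarrow> z \<in> c \<Longrightarrow> z \<in> carrier G \<and> N #> z = c"
  proof -
    fix c z assume c: "c \<in> carrier Q" and z: "z \<in> c"
    obtain x where x: "x \<in> carrier G" "c = N #> x" using cosQ[OF c] by blast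
    have zc: "z \<in> carrier G" using z x r_coset_subset_G[OF Nsub x(1)] by auto
    show "z \<in> carrier G \<and> N #> z = c" using zc repr_independence[OF _ x(1) sN, of z] z x by simp
  qed
  have nonemp: "\<exists>z. z \<in> c" if c: "c \<in> carrier Q" for c
  proof -
    obtain x where x: "x \<in> carrier G" "c = N #> x" using cosQ[OF c] by blast
    show ?thesis using rcos_self[OF x(1) sN] x(2) by blast
  qed
  have ordpos: "\<And>z. z \<in> carrier G \<Longrightarrow> ord z > 0" using ord_ge_1[OF fin] by fastforce
  have ordQpos: "\<And>c. c \<in> carrier Q \<Longrightarrow> group.ord Q c > 0" using group.ord_ge_1[OF gQ finQ] by fastforce

  have nodiv: "\<not> p dvd ord z"
    if c: "c \<in> carrier Q" and zc: "z \<in> c" and minz: "\<forall>w\<in>c. ord z \<le> ord w"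
      and p: "Factorial_Ring.prime p" and pm: "\<not> p dvd group.ord Q c" for c z p
  proof
    assume pz: "p dvd ord z"
    define m' where "m' = group.ord Q c"
    have z: "z \<in> carrier G" "N #> z = c" using elQ[OF c zc] by auto
    have m'1: "m' > 0" unfolding m'_def using ordQpos[OF c] .
    have cop: "coprime p m'" using prime_imp_coprime[OF p] pm unfolding m'_def by blast
    obtain s where s: "[p * s = Suc 0] (mod m')" using cong_solve_coprime_nat[OF cop] by blast
    define j where "j = p * (s + m')"
    have p0: "p > 0" using p prime_gt_0_nat by blast
    have j0: "j > 0" unfolding j_def using p0 m'1 by simp
    have "[p * s + p * m' = Suc 0 + 0] (mod m')"
      using cong_add[OF s cong_mult_self_right[of p m']] .
    hence "[j = Suc 0] (mod m')" unfolding j_def by (simp add: distrib_left)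
    moreover have "j \<ge> Suc 0" using j0 by simp
    ultimately have dj: "m' dvd j - 1" using cong_altdef_nat[of "Suc 0" j m'] by simp
    have zj1: "z [^] (j - 1) \<in> N" using memQ[OF z(1)] dj z(2) unfolding m'_def by simp
    have "Suc (j - 1) = j" using j0 by simp
    hence "z [^] j = z [^] (j - 1) \<otimes> z" using nat_pow_Suc[of z "j - 1"] by simp
    hence zjc: "z [^] j \<in> c" using rcosI[OF zj1 Nsub z(1)] z(2) by simp
    have oj: "ord (z [^] j) = ord z div gcd (ord z) j" using ord_pow_gen[OF z(1), of j] j0 by simp
    have "p dvd gcd (ord z) j" using pz unfolding j_def by simp
    moreover have "gcd (ord z) j > 0" using j0 by simp
    ultimately have "p \<le> gcd (ord z) j" using dvd_imp_le by blast
    hence "gcd (ord z) j \<ge> 2" using prime_ge_2_nat[OF p] by linarith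
    hence "ord z div gcd (ord z) j < ord z" using ordpos[OF z(1)] by (simp add: div_less_dividend)
    thus False using minz zjc oj by fastforce
  qed

  have pcase: False
    if c1: "c1 \<in> carrier Q" and c2: "c2 \<in> carrier Q" and oe: "group.ord Q c1 = group.ord Q c2"
      and z1c: "z1 \<in> c1" and z2c: "z2 \<in> c2" and p: "Factorial_Ring.prime p"
      and pm: "p dvd group.ord Q c1"
      and lt: "multiplicity p (ord z1) < multiplicity p (ord z2)" for c1 c2 z1 z2 p
  proof -
    define m where "m = group.ord Q c1"
    have z1: "z1 \<in> carrier G" "N #> z1 = c1" using elQ[OF c1 z1c] by auto
    have z2: "z2 \<in> carrier G" "N #> z2 = c2" using elQ[OF c2 z2c] by auto
    have m1: "\<And>k. z1 [^] (k::nat) \<in> N \<longleftrightarrow> m dvd k" using memQ[OF z1(1)] z1(2) m_def by simp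
    have m2: "\<And>k. z2 [^] (k::nat) \<in> N \<longleftrightarrow> m dvd k" using memQ[OF z2(1)] z2(2) m_def oe by simp
    have "m dvd ord z1" using m1[of "ord z1"] z1(1) sN subgroup.one_closed by fastforce
    moreover have "m dvd ord z2" using m2[of "ord z2"] z2(1) sN subgroup.one_closed by fastforce
    ultimately obtain e where e: "e dvd ord z1" "e dvd ord z2" "\<not> m dvd ord z1 div e" "m dvd ord z2 div e"
      using nt_key[OF ordpos[OF z1(1)] ordpos[OF z2(1)] _ _ p _ lt] pm m_def by blast
    have ne: "\<And>z. z \<in> carrier G \<Longrightarrow> e dvd ord z \<Longrightarrow> ord (z [^] (ord z div e)) = e"
    proof -
      fix z assume z: "z \<in> carrier G" and ez: "e dvd ord z"
      obtain k where k: "ord z = e * k" using ez by (elim dvdE)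
      have kp: "k > 0" "e > 0" using k ordpos[OF z] by (simp_all add: nat_0_less_mult_iff)
      have dk: "ord z div e = k" using k kp by simp
      have "k dvd ord z" using k by simp
      hence "ord (z [^] (ord z div e)) = ord z div k" using ord_pow[OF z] kp dk by simp
      also have "\<dots> = e" using k kp by simp
      finally show "ord (z [^] (ord z div e)) = e" .
    qed
    have "z1 [^] (ord z1 div e) \<in> N \<longleftrightarrow> z2 [^] (ord z2 div e) \<in> N"
      using oc[of "z1 [^] (ord z1 div e)" "z2 [^] (ord z2 div e)"] ne[OF z1(1) e(1)] ne[OF z2(1) e(2)] z1 z2
      by simp
    thus False using m1 m2 e by simp
  qed

  obtain x0 where x0: "x0 \<in> a" using nonemp[OF assms(5)[folded Q_def]] by blast
  obtain x where x: "x \<in> a" and xmin: "\<forall>w. w \<in> a \<longrightarrow> ord x \<le> ord w"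
    using ex_has_least_nat[of "\<lambda>z. z \<in> a" x0 ord] x0 by blast
  obtain y0 where y0: "y0 \<in> b" using nonemp[OF assms(6)[folded Q_def]] by blast
  obtain y where y: "y \<in> b" and ymin: "\<forall>w. w \<in> b \<longrightarrow> ord y \<le> ord w"
    using ex_has_least_nat[of "\<lambda>z. z \<in> b" y0 ord] y0 by blast
  have aQ: "a \<in> carrier Q" and bQ: "b \<in> carrier Q" and abo: "group.ord Q a = group.ord Q b"
    using assms(5-7) unfolding Q_def by auto
  have xc: "x \<in> carrier G" "N #> x = a" using elQ[OF aQ x] by auto
  have yc: "y \<in> carrier G" "N #> y = b" using elQ[OF bQ y] by auto
  have oxy: "ord x = ord y"
  proof (rule ccontr)
    assume ne: "ord x \<noteq> ord y"
    have "\<exists>p. Factorial_Ring.prime p \<and> multiplicity p (ord x) \<noteq> multiplicity p (ord y)"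
    proof (rule ccontr)
      assume "\<not> ?thesis"
      hence "normalize (ord x) = normalize (ord y)"
        using multiplicity_eq_imp_eq[of "ord x" "ord y"] ordpos[OF xc(1)] ordpos[OF yc(1)] by auto
      thus False using ne by simp
    qed
    then obtain p where p: "Factorial_Ring.prime p" and pne: "multiplicity p (ord x) \<noteq> multiplicity p (ord y)"
      by blast
    show False
    proof (cases "p dvd group.ord Q a")
      case True
      show False
      proof (cases "multiplicity p (ord x) < multiplicity p (ord y)")
        case True
        then show False using pcase[OF aQ bQ abo x y p] \<open>p dvd group.ord Q a\<close> by blast
      next
        case False
        hence "multiplicity p (ord y) < multiplicity p (ord x)" using pne by simp
        then show False using pcase[OF bQ aQ abo[symmetric] y x p] \<open>p dvd group.ord Q a\<close> abo by simp
      qed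
    next
      case False
      have "\<not> p dvd ord x" using nodiv[OF aQ x _ p False] xmin by blast
      moreover have "\<not> p dvd ord y" using nodiv[OF bQ y _ p] False abo ymin by auto
      ultimately show False using pne not_dvd_imp_multiplicity_0 by metis
    qed
  qed
  have part1: "\<exists>ga \<in> a. \<exists>gb \<in> b. ord ga = ord gb" using x y oxy by blast

  define \<psi> where "\<psi> = (\<lambda>q. \<lambda>c \<in> carrier Q. q \<otimes>\<^bsub>Q\<^esub> c \<otimes>\<^bsub>Q\<^esub> inv\<^bsub>Q\<^esub> q)"
  define \<phi> where "\<phi> = compose (carrier G) \<psi> (\<lambda>x. N #> x)"
  have hpsi: "\<psi> \<in> hom Q (BijGroup (carrier Q))" unfolding \<psi>_def using group.conjugation_is_hom[OF gQ] .
  have hphi: "\<phi> \<in> hom G (BijGroup (carrier Q))" unfolding \<phi>_def using hom_compose[OF hom hpsi] .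
  have act: "group_action G (carrier Q) \<phi>"
    unfolding group_action_def group_hom_def group_hom_axioms_def
    using hphi group_BijGroup is_group by simp
  have phival: "\<And>g z. g \<in> carrier G \<Longrightarrow> z \<in> carrier G \<Longrightarrow> \<phi> g (N #> z) = N #> (g \<otimes> z \<otimes> inv g)"
  proof -
    fix g z assume g: "g \<in> carrier G" and z: "z \<in> carrier G"
    have "N #> z \<in> carrier Q" using group_hom.hom_closed[OF gh z] .
    hence "\<phi> g (N #> z) = (N #> g) \<otimes>\<^bsub>Q\<^esub> (N #> z) \<otimes>\<^bsub>Q\<^esub> inv\<^bsub>Q\<^esub> (N #> g)"
      unfolding \<phi>_def \<psi>_def compose_def using g by simp
    also have "\<dots> = N #> (g \<otimes> z \<otimes> inv g)"
      using group_hom.hom_mult[OF gh] group_hom.hom_inv[OF gh] g z by simp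
    finally show "\<phi> g (N #> z) = N #> (g \<otimes> z \<otimes> inv g)" .
  qed
  have orbit_eq: "orbit G \<phi> (N #> z) = conj_class Q (N #> z)" if z: "z \<in> carrier G" for z
  proof -
    have "\<And>g. g \<in> carrier G \<Longrightarrow> \<phi> g (N #> z) = (N #> g) \<otimes>\<^bsub>Q\<^esub> (N #> z) \<otimes>\<^bsub>Q\<^esub> inv\<^bsub>Q\<^esub> (N #> g)"
      using phival z group_hom.hom_mult[OF gh] group_hom.hom_inv[OF gh] by simp
    thus ?thesis unfolding orbit_def conj_class_def using cosQ group_hom.hom_closed[OF gh]
      by (smt (verit, best) Collect_cong)
  qed
  define St where "St = (\<lambda>z. {g \<in> carrier G. g \<otimes> z \<otimes> inv g \<otimes> inv z \<in> N})"
  have stab_eq: "stabilizer G \<phi> (N #> z) = St z" if z: "z \<in> carrier G" for z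
  proof -
    have "\<And>g. g \<in> carrier G \<Longrightarrow> (\<phi> g (N #> z) = N #> z) = (g \<otimes> z \<otimes> inv g \<otimes> inv z \<in> N)"
    proof -
      fix g assume g: "g \<in> carrier G"
      have "g \<otimes> z \<otimes> inv g \<in> carrier G" using g z by simp
      thus "(\<phi> g (N #> z) = N #> z) = (g \<otimes> z \<otimes> inv g \<otimes> inv z \<in> N)"
        using phival[OF g z] eqN[OF _ z] by simp
    qed
    thus ?thesis unfolding stabilizer_def St_def by blast
  qed
  have stle: "card (St z1) \<le> card (St z2)"
    if z1: "z1 \<in> carrier G" and z2: "z2 \<in> carrier G" and oz: "ord z1 = ord z2" for z1 z2
  proof -
    obtain \<Psi> where bij: "bij_betw \<Psi> (carrier G) (carrier G)"
      and isos: "\<forall>g \<in> carrier G. \<exists>f. f \<in> iso (subgroup_generated G {z1, g}) (subgroup_generated G {z2, \<Psi> g})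
             \<and> f z1 = z2 \<and> f g = \<Psi> g"
      using assms(3) z1 z2 oz unfolding one_tuple_regular_def by blast
    have maps: "\<Psi> g \<in> St z2" if g: "g \<in> St z1" for g
    proof -
      have gc: "g \<in> carrier G" using g St_def by simp
      obtain f where f: "f \<in> iso (subgroup_generated G {z1, g}) (subgroup_generated G {z2, \<Psi> g})"
        "f z1 = z2" "f g = \<Psi> g" using isos gc by blast
      let ?H = "subgroup_generated G {z1, g}" and ?K = "subgroup_generated G {z2, \<Psi> g}"
      have Pg: "\<Psi> g \<in> carrier G" using bij gc bij_betwE by blast
      have ghf: "group_hom ?H ?K f" using f(1)
        unfolding group_hom_def group_hom_axioms_def iso_def by simp
      have inH: "z1 \<in> carrier ?H" "g \<in> carrier ?H"
        using z1 gc by (auto simp: carrier_subgroup_generated intro: generate.incl)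
      have inK: "z2 \<in> carrier ?K" "\<Psi> g \<in> carrier ?K"
        using z2 Pg by (auto simp: carrier_subgroup_generated intro: generate.incl)
      have gH: "group ?H" "group ?K" by simp_all
      let ?w = "g \<otimes> z1 \<otimes> inv g \<otimes> inv z1"
      have invH: "inv\<^bsub>?H\<^esub> g = inv g" "inv\<^bsub>?H\<^esub> z1 = inv z1" using inH by simp_all
      have invK: "inv\<^bsub>?K\<^esub> (\<Psi> g) = inv (\<Psi> g)" "inv\<^bsub>?K\<^esub> z2 = inv z2" using inK by simp_all
      have ic: "inv g \<in> carrier ?H" "inv z1 \<in> carrier ?H"
        using group.inv_closed[OF gH(1)] inH invH by metis+
      have icK: "inv (\<Psi> g) \<in> carrier ?K" "inv z2 \<in> carrier ?K"
        using group.inv_closed[OF gH(2)] inK invK by metis+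
      have mH: "\<And>u v. u \<in> carrier ?H \<Longrightarrow> v \<in> carrier ?H \<Longrightarrow> u \<otimes> v \<in> carrier ?H"
        using group.subgroup_self[OF gH(1)] by (metis monoid.m_closed group.is_monoid gH(1) mult_subgroup_generated)
      have wH: "?w \<in> carrier ?H" using mH inH ic by blast
      have fm: "\<And>u v. u \<in> carrier ?H \<Longrightarrow> v \<in> carrier ?H \<Longrightarrow> f (u \<otimes> v) = f u \<otimes> f v"
        using group_hom.hom_mult[OF ghf] by simp
      have finv: "f (inv g) = inv (\<Psi> g)" "f (inv z1) = inv z2"
        using group_hom.hom_inv[OF ghf] inH invH invK f by metis+
      have fw: "f ?w = \<Psi> g \<otimes> z2 \<otimes> inv (\<Psi> g) \<otimes> inv z2"
        using fm inH ic mH finv f by simp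
      have "ord (f ?w) = ord ?w" using iso_sg_ord[OF f(1) wH] .
      hence "?w \<in> N \<longleftrightarrow> \<Psi> g \<otimes> z2 \<otimes> inv (\<Psi> g) \<otimes> inv z2 \<in> N"
        using oc[of ?w "\<Psi> g \<otimes> z2 \<otimes> inv (\<Psi> g) \<otimes> inv z2"] fw gc z1 z2 Pg by simp
      thus ?thesis using g Pg unfolding St_def by simp
    qed
    have inj: "inj_on \<Psi> (St z1)" using bij unfolding bij_betw_def St_def by (auto intro: inj_on_subset)
    have finSt: "finite (St z2)" unfolding St_def using fin by simp
    show ?thesis using card_inj_on_le[OF inj _ finSt] maps by blast
  qed
  have cardSt: "card (St x) = card (St y)" using stle[OF xc(1) yc(1) oxy] stle[OF yc(1) xc(1) oxy[symmetric]] by simp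
  have osa: "card (conj_class Q a) * card (St x) = order G"
    using group_action.orbit_stabilizer_theorem[OF act, of a] aQ orbit_eq[OF xc(1)] stab_eq[OF xc(1)] xc by simp
  have osb: "card (conj_class Q b) * card (St y) = order G"
    using group_action.orbit_stabilizer_theorem[OF act, of b] bQ orbit_eq[OF yc(1)] stab_eq[OF yc(1)] yc by simp
  have "order G > 0" using fin order_gt_0_iff_finite by blast
  hence "card (St x) > 0" using osa by (metis mult_0_right neq0_conv)
  moreover have "card (conj_class Q a) * card (St x) = card (conj_class Q b) * card (St x)"
    using osa osb cardSt by simp
  ultimately have "card (conj_class Q a) = card (conj_class Q b)" by simp
  thus ?thesis using part1 unfolding Q_def by simp
qed

end
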